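(* Consider the P-SSD algorithm described in the context, executed over an arbitrary, possibly time-varying, sequence of digraphs. Then for each agent $i\in\{1,\dots,M\}$: (a) for all $k\in\mathbb{N}_0$, $C_k^i$ is either zero or has full column rank; (b) for all $k\in\mathbb{N}$, $\mathcal{R}(D_k^iE_k^i)=\mathcal{R}(C_k^i)$; (c) for all $k\in\mathbb{N}$, $\mathcal{R}(D(X_i)C_k^i)=\mathcal{R}(D(Y_i)C_k^i)$.
   Context: Data setting: a map $T:\mathcal{M}\to\mathcal{M}$, $\mathcal{M}\subseteq\mathbb{R}^n$; a dictionary $D(x)=[d_1(x),\dots,d_{N_d}(x)]$ of real-valued functions on $\mathcal{M}$; data matrices $X,Y\in\mathbb{R}^{N\times n}$ whose $i$-th rows $x_i^T,y_i^T$ satisfy $y_i=T(x_i)$; $D(X)\in\mathbb{R}^{N\times N_d}$ is the matrix with rows $D(x_1),\dots,D(x_N)$ (similarly $D(Y)$). Assumption: $D(X)$ and $D(Y)$ have full column rank. There are $M$ agents; agent $i$ holds local dictionary snapshots $D(X_i),D(Y_i)$ (obtained from a subset of the snapshot pairs) such that the union over $i$ of the rows of $[D(X_i),D(Y_i)]$ equals the set of rows of $[D(X),D(Y)]$. There are signature matrices $D(X_s),D(Y_s)$ with full column rank such that the rows of $[D(X_s),D(Y_s)]$ are contained in the rows of $[D(X_i),D(Y_i)]$ for every $i$. SSD algorithm: given $A,B\in\mathbb{R}^{m\times q}$, set $A_1=A$, $B_1=B$, $C=I_q$, and iterate: let $[Z^A_j;Z^B_j]$ be a matrix whose columns form a basis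 of the null space of $[A_j,B_j]$ (with $Z^A_j$ having as many rows as $A_j$ has columns); if the null space is trivial return $0$; if the number of rows of $Z^A_j$ is at most its number of columns, return $C$; otherwise set $C\leftarrow CZ^A_j$, $A_{j+1}=A_jZ^A_j$, $B_{j+1}=B_jZ^A_j$. Its output is denoted $\mathrm{SSD}(A,B)$. P-SSD algorithm: at iteration $k\ge1$ the digraph $G_k$ is used; an edge $(j,i)\in E_k$ means $j$ is an in-neighbor of $i$, and $\mathcal{N}_{\mathrm{in}}^k(i)$ denotes the in-neighbors of $i$ in $G_k$. Each agent $i$ sets $C_0^i=I_{N_d}$, $\mathrm{flag}_0^i=0$, and for $k=1,2,\dots$: receives $C_{k-1}^j$ for $j\in\mathcal{N}_{\mathrm{in}}^k(i)$; sets $D_k^i=\mathrm{basis}\big(\bigcap_{j\in\{i\}\cup\mathcal{N}_{\mathrm{in}}^k(i)}\mathcal{R}(C_{k-1}^j)\big)$; sets $E_k^i=\mathrm{SSD}(D(X_i)D_k^i,D(Y_i)D_k^i)$; if the number of columns of $D_k^iE_k^i$ is strictly less than that of $C_{k-1}^i$, sets $C_k^i=D_k^iE_k^i$ and $\mathrm{flag}_k^i=0$; otherwise sets $C_k^i=C_{k-1}^i$ and $\mathrm{flag}_k^i=1$; then transmits $C_k^i$ to its out-neighbors. Here $\mathrm{basis}(\mathcal{A})$ returns a matrix whose columns form a basis of the subspace $\mathcal{A}$, and returns $0$ if $\mathcal{A}=\{0\}$; the matrix $0$ is regarded as having $0$ columns. $\mathcal{R}(\cdot)$ denotes range space. *)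

theory Defs
  imports "Jordan_Normal_Form.Matrix_Kernel"
begin

definition hcat :: "real mat \<Rightarrow> real mat \<Rightarrow> real mat" where
  "hcat A B = mat (dim_row A) (dim_col A + dim_col B)
     (\<lambda>(i,j). if j < dim_col A then A $$ (i,j) else B $$ (i, j - dim_col A))"

definition top_rows :: "nat \<Rightarrow> real mat \<Rightarrow> real mat" where
  "top_rows p Z = mat p (dim_col Z) (\<lambda>(i,j). Z $$ (i,j))"

definition col_range :: "real mat \<Rightarrow> real vec set" where
  "col_range A = {A *\<^sub>v v | v. v \<in> carrier_vec (dim_col A)}"

definition full_col_rank :: "real mat \<Rightarrow> bool" where
  "full_col_rank A \<longleftrightarrow>
     (\<forall>v \<in> carrier_vec (dim_col A). A *\<^sub>v v = 0\<^sub>v (dim_row A) \<longrightarrow> v = 0\<^sub>v (dim_col A))"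

(* B (with n rows) is a valid output of basis(S): its columns form a basis of S.
   For S = {0} this forces B to have 0 columns, i.e. B is "the matrix 0". *)
definition is_basis_of :: "nat \<Rightarrow> real mat \<Rightarrow> real vec set \<Rightarrow> bool" where
  "is_basis_of n B S \<longleftrightarrow> dim_row B = n \<and> full_col_rank B \<and> col_range B = S"

(* ssd_run A B C Out: starting from A_j = A, B_j = B with accumulated C,
   some execution of the SSD loop (any choice of null-space bases) returns Out. *)
inductive ssd_run :: "real mat \<Rightarrow> real mat \<Rightarrow> real mat \<Rightarrow> real mat \<Rightarrow> bool" where
  trivial: "full_col_rank (hcat A B) \<Longrightarrow> ssd_run A B C (0\<^sub>m (dim_row C) 0)"
| stop: "\<not> full_col_rank (hcat A B) \<Longrightarrow>
         is_basis_of (dim_col A + dim_col B) Z (mat_kernel (hcat A B)) \<Longrightarrow>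
         dim_col A \<le> dim_col Z \<Longrightarrow> ssd_run A B C C"
| step: "\<not> full_col_rank (hcat A B) \<Longrightarrow>
         is_basis_of (dim_col A + dim_col B) Z (mat_kernel (hcat A B)) \<Longrightarrow>
         dim_col Z < dim_col A \<Longrightarrow>
         ssd_run (A * top_rows (dim_col A) Z) (B * top_rows (dim_col A) Z)
                 (C * top_rows (dim_col A) Z) Out \<Longrightarrow>
         ssd_run A B C Out"

definition is_SSD :: "real mat \<Rightarrow> real mat \<Rightarrow> real mat \<Rightarrow> bool" where
  "is_SSD A B E \<longleftrightarrow> ssd_run A B (1\<^sub>m (dim_col A)) E"

definition in_nbrs :: "(nat \<times> nat) set \<Rightarrow> nat \<Rightarrow> nat set" where
  "in_nbrs G i = {j. (j, i) \<in> G}"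

end

theory Submission
  imports Defs
begin


lemma sq_inj_surj:
  assumes M: "M \<in> carrier_mat n n" and fr: "full_col_rank M" and w: "w \<in> carrier_vec n"
  shows "\<exists>v \<in> carrier_vec n. M *\<^sub>v v = w"
proof -
  have "det M \<noteq> 0"
    using det_0_iff_vec_prod_zero[OF M] fr M unfolding full_col_rank_def by auto
  from det_non_zero_imp_unit[OF M this, of "()"]
  obtain B where B: "B \<in> carrier_mat n n" "M * B = 1\<^sub>m n"
    unfolding Units_def ring_mat_def by auto
  have "M *\<^sub>v (B *\<^sub>v w) = (M * B) *\<^sub>v w" using M B w by (simp del: assoc_mult_mat_vec add: assoc_mult_mat_vec[symmetric])
  also have "\<dots> = w" using B w by simp
  finally show ?thesis using B w by (intro bexI[of _ "B *\<^sub>v w"]) auto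
qed

lemma fcr_cols_le:
  assumes X: "X \<in> carrier_mat q p" and fr: "full_col_rank X"
  shows "p \<le> q"
proof (rule ccontr)
  assume "\<not> p \<le> q"
  hence qp: "q < p" by simp
  define Y where "Y = mat p p (\<lambda>(i,j). if i < q then X $$ (i,j) else 0)"
  have Y: "Y \<in> carrier_mat p p" unfolding Y_def by simp
  have frY: "full_col_rank Y" unfolding full_col_rank_def
  proof (intro ballI impI)
    fix v assume v: "v \<in> carrier_vec (dim_col Y)" and Yv: "Y *\<^sub>v v = 0\<^sub>v (dim_row Y)"
    have "X *\<^sub>v v = 0\<^sub>v (dim_row X)"
    proof (rule eq_vecI)
      fix i assume "i < dim_vec (0\<^sub>v (dim_row X))"
      hence i: "i < q" using X by simp
      have "(Y *\<^sub>v v) $ i = 0" using Yv i qp Y by simp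
      moreover have "(Y *\<^sub>v v) $ i = row Y i \<bullet> v" using i qp Y by simp
      moreover have "row Y i = row X i" using i qp X unfolding Y_def by (intro eq_vecI) auto
      ultimately show "(X *\<^sub>v v) $ i = 0\<^sub>v (dim_row X) $ i" using i X by simp
    qed (use X in simp)
    thus "v = 0\<^sub>v (dim_col Y)" using fr v X Y unfolding full_col_rank_def by auto
  qed
  define e :: "real vec" where "e = unit_vec p (p - 1)"
  have e: "e \<in> carrier_vec p" unfolding e_def by simp
  obtain v where v: "v \<in> carrier_vec p" "Y *\<^sub>v v = e" using sq_inj_surj[OF Y frY e] by auto
  have "row Y (p - 1) = 0\<^sub>v p" using qp unfolding Y_def by (intro eq_vecI) auto
  moreover have "(Y *\<^sub>v v) $ (p - 1) = row Y (p - 1) \<bullet> v" using qp Y by simp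
  ultimately have "(Y *\<^sub>v v) $ (p - 1) = 0" using v by simp
  moreover have "e $ (p - 1) = 1" using qp unfolding e_def by simp
  ultimately show False using v by simp
qed



lemma fcr_mult:
  assumes A: "A \<in> carrier_mat m n" and B: "B \<in> carrier_mat n p"
    and fA: "full_col_rank A" and fB: "full_col_rank B"
  shows "full_col_rank (A * B)"
  unfolding full_col_rank_def
proof (intro ballI impI)
  fix v assume v: "v \<in> carrier_vec (dim_col (A * B))" and z: "A * B *\<^sub>v v = 0\<^sub>v (dim_row (A * B))"
  have v': "v \<in> carrier_vec p" using v B by simp
  have "A *\<^sub>v (B *\<^sub>v v) = 0\<^sub>v (dim_row A)" using z A B v' by simp
  hence "B *\<^sub>v v = 0\<^sub>v (dim_col A)" using fA A B v' unfolding full_col_rank_def by auto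
  hence "B *\<^sub>v v = 0\<^sub>v (dim_row B)" using A B by simp
  thus "v = 0\<^sub>v (dim_col (A * B))" using fB B v' unfolding full_col_rank_def by auto
qed


lemma col_range_mult_sub:
  assumes A: "A \<in> carrier_mat m n" and B: "B \<in> carrier_mat n p"
  shows "col_range (A * B) \<subseteq> col_range A"
  unfolding col_range_def
proof safe
  fix v :: "real vec" assume v: "v \<in> carrier_vec (dim_col (A * B))"
  hence "A * B *\<^sub>v v = A *\<^sub>v (B *\<^sub>v v)" using A B by simp
  moreover have "B *\<^sub>v v \<in> carrier_vec (dim_col A)" using A B using A B by (intro carrier_vecI) simp
  ultimately show "\<exists>w. A * B *\<^sub>v v = A *\<^sub>v w \<and> w \<in> carrier_vec (dim_col A)" by blast
qed

lemma col_range_cong_mult: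
  assumes X: "X \<in> carrier_mat m n" and M: "M \<in> carrier_mat n p" and N: "N \<in> carrier_mat n q"
    and eq: "col_range M = col_range N"
  shows "col_range (X * M) \<subseteq> col_range (X * N)"
  unfolding col_range_def
proof safe
  fix v :: "real vec" assume v: "v \<in> carrier_vec (dim_col (X * M))"
  hence v': "v \<in> carrier_vec p" using M by simp
  have "M *\<^sub>v v \<in> col_range M" using v' M unfolding col_range_def by auto
  hence "M *\<^sub>v v \<in> col_range N" using eq by simp
  then obtain w where w: "w \<in> carrier_vec q" "M *\<^sub>v v = N *\<^sub>v w" using N unfolding col_range_def by auto
  have "X * M *\<^sub>v v = X * N *\<^sub>v w" using X M N v' w by simp
  thus "\<exists>w. X * M *\<^sub>v v = X * N *\<^sub>v w \<and> w \<in> carrier_vec (dim_col (X * N))" using w N by auto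
qed


lemma col_range_eq_dim:
  assumes A: "A \<in> carrier_mat n p" and B: "B \<in> carrier_mat n q"
    and fA: "full_col_rank A" and fB: "full_col_rank B"
    and sub: "col_range A \<subseteq> col_range B" and qp: "q \<le> p"
  shows "col_range A = col_range B"
proof -
  have ex: "\<forall>j<p. \<exists>w. w \<in> carrier_vec q \<and> B *\<^sub>v w = col A j"
  proof (intro allI impI)
    fix j assume j: "j < p"
    have "col A j = A *\<^sub>v unit_vec p j" using A j by (intro eq_vecI) auto
    hence "col A j \<in> col_range A" using A unfolding col_range_def by auto
    hence "col A j \<in> col_range B" using sub by blast
    thus "\<exists>w. w \<in> carrier_vec q \<and> B *\<^sub>v w = col A j" using B unfolding col_range_def by auto
  qed
  define W where "W j = (SOME w. w \<in> carrier_vec q \<and> B *\<^sub>v w = col A j)" for j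
  have W: "\<And>j. j < p \<Longrightarrow> W j \<in> carrier_vec q \<and> B *\<^sub>v W j = col A j"
  proof -
    fix j assume j: "j < p"
    show "W j \<in> carrier_vec q \<and> B *\<^sub>v W j = col A j"
      unfolding W_def by (rule someI_ex) (use ex j in blast)
  qed
  define X where "X = mat q p (\<lambda>(i,j). W j $ i)"
  have X: "X \<in> carrier_mat q p" unfolding X_def by simp
  have colX: "\<And>j. j < p \<Longrightarrow> col X j = W j"
  proof -
    fix j assume j: "j < p"
    hence Wj: "dim_vec (W j) = q" using W by auto
    show "col X j = W j" unfolding X_def using j Wj by (intro eq_vecI) auto
  qed
  have BX: "B * X = A"
  proof (rule mat_col_eqI)
    fix j assume "j < dim_col A"
    hence j: "j < p" using A by simp
    have "col (B * X) j = B *\<^sub>v col X j" using col_mult2[OF B X j] .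
    thus "col (B * X) j = col A j" using colX W j by simp
  qed (use A B X in auto)
  have fX: "full_col_rank X" unfolding full_col_rank_def
  proof (intro ballI impI)
    fix v assume v: "v \<in> carrier_vec (dim_col X)" and z: "X *\<^sub>v v = 0\<^sub>v (dim_row X)"
    have "A *\<^sub>v v = (B * X) *\<^sub>v v" using BX by simp
    also have "\<dots> = B *\<^sub>v (X *\<^sub>v v)" using B X v by (simp only: assoc_mult_mat_vec carrier_matD)
    also have "\<dots> = B *\<^sub>v 0\<^sub>v q" using z X by simp
    also have "\<dots> = 0\<^sub>v (dim_row A)" using B A by auto
    finally show "v = 0\<^sub>v (dim_col X)" using fA v A X unfolding full_col_rank_def by auto
  qed
  have "p \<le> q" using fcr_cols_le[OF X fX] .
  hence pq: "p = q" using qp by simp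
  have "col_range B \<subseteq> col_range A"
  proof
    fix y assume "y \<in> col_range B"
    then obtain w where w: "w \<in> carrier_vec q" "y = B *\<^sub>v w" using B unfolding col_range_def by auto
    obtain u where u: "u \<in> carrier_vec p" "X *\<^sub>v u = w" using sq_inj_surj[of X p] X fX w pq by auto
    have "y = B *\<^sub>v (X *\<^sub>v u)" using w u by simp
    also have "\<dots> = (B * X) *\<^sub>v u" using B X u by (simp only: assoc_mult_mat_vec)
    finally have "y = A *\<^sub>v u" using BX by simp
    thus "y \<in> col_range A" using u A unfolding col_range_def by auto
  qed
  thus ?thesis using sub by auto
qed



lemma hcat_carrier: "A \<in> carrier_mat m p \<Longrightarrow> B \<in> carrier_mat m p' \<Longrightarrow> hcat A B \<in> carrier_mat m (p + p')"
  unfolding hcat_def by simp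

lemma hcat_index: "A \<in> carrier_mat m p \<Longrightarrow> B \<in> carrier_mat m p' \<Longrightarrow> i < m \<Longrightarrow> k < p + p' \<Longrightarrow>
   hcat A B $$ (i,k) = (if k < p then A $$ (i,k) else B $$ (i, k - p))"
  unfolding hcat_def by simp

lemma hcat_mult_vec:
  assumes A: "A \<in> carrier_mat m p" and B: "B \<in> carrier_mat m p'" and v: "v \<in> carrier_vec (p + p')"
  shows "hcat A B *\<^sub>v v = A *\<^sub>v vec_first v p + B *\<^sub>v vec_last v p'"
proof (rule eq_vecI)
  fix i assume "i < dim_vec (A *\<^sub>v vec_first v p + B *\<^sub>v vec_last v p')"
  hence i: "i < m" using A B by simp
  define g where "g k = hcat A B $$ (i,k) * v $ k" for k
  have "(hcat A B *\<^sub>v v) $ i = sum g {0..<p+p'}"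
    using i A B v hcat_carrier[OF A B] unfolding g_def
    by (simp add: mult_mat_vec_def scalar_prod_def)
  also have "\<dots> = sum g {0..<p} + sum g {p..<p+p'}"
    by (rule sum.atLeastLessThan_concat[symmetric]) auto
  also have "sum g {0..<p} = (A *\<^sub>v vec_first v p) $ i"
    using i A B unfolding g_def
    by (auto simp: mult_mat_vec_def scalar_prod_def hcat_index[OF A B] vec_first_def intro!: sum.cong)
  also have "sum g {p..<p+p'} = sum (g \<circ> plus p) {0..<p'}"
    using sum.atLeastLessThan_shift_bounds[of g 0 p p'] by (simp add: add.commute)
  also have "\<dots> = (B *\<^sub>v vec_last v p') $ i"
    using i A B v unfolding g_def
    by (auto simp: mult_mat_vec_def scalar_prod_def hcat_index[OF A B] vec_last_def intro!: sum.cong)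
  finally show "(hcat A B *\<^sub>v v) $ i = (A *\<^sub>v vec_first v p + B *\<^sub>v vec_last v p') $ i"
    using i A B by simp
qed (use A B hcat_carrier[OF A B] in simp)



definition bot_rows :: "nat \<Rightarrow> nat \<Rightarrow> real mat \<Rightarrow> real mat" where
  "bot_rows p p' Z = mat p' (dim_col Z) (\<lambda>(i,j). Z $$ (p + i, j))"

lemma top_rows_carrier: "Z \<in> carrier_mat n r \<Longrightarrow> top_rows p Z \<in> carrier_mat p r"
  unfolding top_rows_def by simp

lemma bot_rows_carrier: "Z \<in> carrier_mat n r \<Longrightarrow> bot_rows p p' Z \<in> carrier_mat p' r"
  unfolding bot_rows_def by simp

lemma top_rows_mult:
  assumes Z: "Z \<in> carrier_mat (p + p') r" and u: "u \<in> carrier_vec r"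
  shows "top_rows p Z *\<^sub>v u = vec_first (Z *\<^sub>v u) p"
proof (rule eq_vecI)
  fix i assume "i < dim_vec (vec_first (Z *\<^sub>v u) p)"
  hence i: "i < p" by simp
  have "row (top_rows p Z) i = row Z i" using i Z unfolding top_rows_def by (intro eq_vecI) auto
  thus "(top_rows p Z *\<^sub>v u) $ i = vec_first (Z *\<^sub>v u) p $ i"
    using i Z unfolding vec_first_def by (simp add: top_rows_def)
qed (simp add: top_rows_def)

lemma bot_rows_mult:
  assumes Z: "Z \<in> carrier_mat (p + p') r" and u: "u \<in> carrier_vec r"
  shows "bot_rows p p' Z *\<^sub>v u = vec_last (Z *\<^sub>v u) p'"
proof (rule eq_vecI)
  fix i assume "i < dim_vec (vec_last (Z *\<^sub>v u) p')"
  hence i: "i < p'" by simp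
  have "row (bot_rows p p' Z) i = row Z (p + i)" using i Z unfolding bot_rows_def by (intro eq_vecI) auto
  thus "(bot_rows p p' Z *\<^sub>v u) $ i = vec_last (Z *\<^sub>v u) p' $ i"
    using i Z unfolding vec_last_def by (simp add: bot_rows_def)
qed (simp add: bot_rows_def)

lemma kernel_rel:
  assumes A: "A \<in> carrier_mat m p" and B: "B \<in> carrier_mat m p'"
    and Z: "Z \<in> carrier_mat (p + p') r" and ZK: "col_range Z = mat_kernel (hcat A B)"
    and u: "u \<in> carrier_vec r"
  shows "A *\<^sub>v (top_rows p Z *\<^sub>v u) + B *\<^sub>v (bot_rows p p' Z *\<^sub>v u) = 0\<^sub>v m"
proof -
  have "Z *\<^sub>v u \<in> col_range Z" using Z u unfolding col_range_def by auto
  hence "Z *\<^sub>v u \<in> mat_kernel (hcat A B)" using ZK by simp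
  hence "hcat A B *\<^sub>v (Z *\<^sub>v u) = 0\<^sub>v m" using hcat_carrier[OF A B] unfolding mat_kernel_def by simp
  moreover have "Z *\<^sub>v u \<in> carrier_vec (p + p')" using Z by (intro carrier_vecI) simp
  ultimately show ?thesis
    using hcat_mult_vec[OF A B] top_rows_mult[OF Z u] bot_rows_mult[OF Z u] by simp
qed

lemma top_fcr:
  assumes A: "A \<in> carrier_mat m p" and B: "B \<in> carrier_mat m p'" and fB: "full_col_rank B"
    and Z: "Z \<in> carrier_mat (p + p') r" and fZ: "full_col_rank Z"
    and ZK: "col_range Z = mat_kernel (hcat A B)"
  shows "full_col_rank (top_rows p Z)"
  unfolding full_col_rank_def
proof (intro ballI impI)
  fix u :: "real vec" assume u: "u \<in> carrier_vec (dim_col (top_rows p Z))"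
    and z: "top_rows p Z *\<^sub>v u = 0\<^sub>v (dim_row (top_rows p Z))"
  have u': "u \<in> carrier_vec r" using u Z by (simp add: top_rows_def)
  have z': "top_rows p Z *\<^sub>v u = 0\<^sub>v p" using z by (simp add: top_rows_def)
  have rel: "A *\<^sub>v (top_rows p Z *\<^sub>v u) + B *\<^sub>v (bot_rows p p' Z *\<^sub>v u) = 0\<^sub>v m"
    using kernel_rel[OF A B Z ZK u'] .
  have "A *\<^sub>v (top_rows p Z *\<^sub>v u) = 0\<^sub>v m" using z' A by auto
  moreover have bc: "B *\<^sub>v (bot_rows p p' Z *\<^sub>v u) \<in> carrier_vec m" using B by (intro carrier_vecI) simp
  ultimately have "B *\<^sub>v (bot_rows p p' Z *\<^sub>v u) = 0\<^sub>v m" using rel by simp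
  moreover have "bot_rows p p' Z *\<^sub>v u \<in> carrier_vec p'" by (intro carrier_vecI) (simp add: bot_rows_def)
  ultimately have zb: "bot_rows p p' Z *\<^sub>v u = 0\<^sub>v p'" using fB B unfolding full_col_rank_def by auto
  have Zu: "Z *\<^sub>v u \<in> carrier_vec (p + p')" using Z by (intro carrier_vecI) simp
  have "Z *\<^sub>v u = vec_first (Z *\<^sub>v u) p @\<^sub>v vec_last (Z *\<^sub>v u) p'"
    using vec_first_last_append[OF Zu] by simp
  also have "\<dots> = 0\<^sub>v p @\<^sub>v 0\<^sub>v p'"
    using z' zb top_rows_mult[OF Z u'] bot_rows_mult[OF Z u'] by simp
  also have "\<dots> = 0\<^sub>v (dim_row Z)" using Z by (intro eq_vecI) auto
  finally have "Z *\<^sub>v u = 0\<^sub>v (dim_row Z)" .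
  hence "u = 0\<^sub>v (dim_col Z)" using fZ u' Z unfolding full_col_rank_def by auto
  thus "u = 0\<^sub>v (dim_col (top_rows p Z))" using Z by (simp add: top_rows_def)
qed



lemma stop_range:
  assumes A: "A \<in> carrier_mat m p" and B: "B \<in> carrier_mat m p"
    and fA: "full_col_rank A" and fB: "full_col_rank B"
    and Z: "Z \<in> carrier_mat (p + p) r" and fZ: "full_col_rank Z"
    and ZK: "col_range Z = mat_kernel (hcat A B)" and pr: "p \<le> r"
  shows "col_range A = col_range B"
proof -
  let ?T = "top_rows p Z"
  have T: "?T \<in> carrier_mat p r" using top_rows_carrier[OF Z] .
  have fT: "full_col_rank ?T" using top_fcr[OF A B fB Z fZ ZK] .
  have "r \<le> p" using fcr_cols_le[OF T fT] .
  hence rp: "r = p" using pr by simp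
  have T': "?T \<in> carrier_mat p p" using T rp by simp
  have "col_range A \<subseteq> col_range B"
  proof
    fix x assume "x \<in> col_range A"
    then obtain u where u: "u \<in> carrier_vec p" "x = A *\<^sub>v u" using A unfolding col_range_def by auto
    obtain w where w: "w \<in> carrier_vec p" "?T *\<^sub>v w = u" using sq_inj_surj[OF T' fT u(1)] by auto
    have w': "w \<in> carrier_vec r" using w rp by simp
    define y where "y = bot_rows p p Z *\<^sub>v w"
    have y: "y \<in> carrier_vec p" unfolding y_def by (intro carrier_vecI) (simp add: bot_rows_def)
    have rel: "x + B *\<^sub>v y = 0\<^sub>v m" using kernel_rel[OF A B Z ZK w'] w u unfolding y_def by simp
    have xc: "x \<in> carrier_vec m" using u A by (intro carrier_vecI) simp
    have bBy: "B *\<^sub>v y \<in> carrier_vec m" using B by (intro carrier_vecI) simp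
    have "x = (-1) \<cdot>\<^sub>v (B *\<^sub>v y)"
    proof (rule eq_vecI)
      fix i assume "i < dim_vec ((-1) \<cdot>\<^sub>v (B *\<^sub>v y))"
      hence i: "i < m" using B by simp
      have "(x + B *\<^sub>v y) $ i = 0" using rel i by simp
      moreover have "dim_vec (B *\<^sub>v y) = m" using B by simp
      ultimately have "x $ i + (B *\<^sub>v y) $ i = 0" using i by (simp only: index_add_vec(1))
      thus "x $ i = ((-1) \<cdot>\<^sub>v (B *\<^sub>v y)) $ i" using i B by simp
    qed (use xc B in simp)
    also have "\<dots> = B *\<^sub>v ((-1) \<cdot>\<^sub>v y)" using mult_mat_vec[OF B y] by simp
    finally have "x = B *\<^sub>v ((-1) \<cdot>\<^sub>v y)" .
    moreover have "(-1) \<cdot>\<^sub>v y \<in> carrier_vec (dim_col B)" using y B by simp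
    ultimately show "x \<in> col_range B" unfolding col_range_def by blast
  qed
  thus ?thesis using col_range_eq_dim[OF A B fA fB] by simp
qed

lemma fcr_zero_cols: "full_col_rank (0\<^sub>m n 0)"
  unfolding full_col_rank_def by (auto intro!: eq_vecI)

lemma ssd_inv:
  assumes "ssd_run A B C Out"
  shows "A0 \<in> carrier_mat m q \<Longrightarrow> B0 \<in> carrier_mat m q \<Longrightarrow> C \<in> carrier_mat q p \<Longrightarrow>
    A = A0 * C \<Longrightarrow> B = B0 * C \<Longrightarrow> full_col_rank A \<Longrightarrow> full_col_rank B \<Longrightarrow> full_col_rank C \<Longrightarrow>
    dim_row Out = q \<and> full_col_rank Out \<and> col_range (A0 * Out) = col_range (B0 * Out)"
  using assms
proof (induction arbitrary: p rule: ssd_run.induct)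
  case (trivial A B C)
  have "A0 * 0\<^sub>m (dim_row C) 0 = 0\<^sub>m m 0" using trivial.prems by simp
  moreover have "B0 * 0\<^sub>m (dim_row C) 0 = 0\<^sub>m m 0" using trivial.prems by simp
  ultimately show ?case using trivial.prems fcr_zero_cols by simp
next
  case (stop A B Z C)
  have A: "A \<in> carrier_mat m p" using stop.prems by simp
  have B: "B \<in> carrier_mat m p" using stop.prems by simp
  have Z: "Z \<in> carrier_mat (p + p) (dim_col Z)"
    using stop.hyps(2) A B unfolding is_basis_of_def by auto
  have "col_range A = col_range B"
    using stop_range[OF A B _ _ Z] stop.hyps stop.prems A unfolding is_basis_of_def by auto
  thus ?case using stop.prems by simp
next
  case (step A B Z C Out)
  have A: "A \<in> carrier_mat m p" using step.prems by simp
  have B: "B \<in> carrier_mat m p" using step.prems by simp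
  have Z: "Z \<in> carrier_mat (p + p) (dim_col Z)"
    using step.hyps(2) A B unfolding is_basis_of_def by auto
  have ZK: "col_range Z = mat_kernel (hcat A B)" and fZ: "full_col_rank Z"
    using step.hyps(2) unfolding is_basis_of_def by auto
  let ?T = "top_rows (dim_col A) Z"
  have TT: "?T = top_rows p Z" using A by simp
  have T: "?T \<in> carrier_mat p (dim_col Z)" using top_rows_carrier[OF Z] TT by simp
  have fT: "full_col_rank ?T" using top_fcr[OF A B _ Z fZ ZK] step.prems TT by simp
  have C: "C \<in> carrier_mat q p" using step.prems by simp
  show ?case
  proof (rule step.IH)
    show "A0 \<in> carrier_mat m q" "B0 \<in> carrier_mat m q" using step.prems by auto
    show "C * ?T \<in> carrier_mat q (dim_col Z)" using C T by simp
    show "A * ?T = A0 * (C * ?T)" using step.prems C T by simp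
    show "B * ?T = B0 * (C * ?T)" using step.prems C T by simp
    show "full_col_rank (A * ?T)" using fcr_mult[OF A T] step.prems fT by simp
    show "full_col_rank (B * ?T)" using fcr_mult[OF B T] step.prems fT by simp
    show "full_col_rank (C * ?T)" using fcr_mult[OF C T] step.prems fT by simp
  qed
qed



lemma row_hcat:
  assumes A: "A \<in> carrier_mat m n" and B: "B \<in> carrier_mat m n2" and i: "i < m"
  shows "vec_first (row (hcat A B) i) n = row A i" "vec_last (row (hcat A B) i) n2 = row B i"
  using A B i by (auto intro!: eq_vecI simp: vec_first_def vec_last_def hcat_def)

lemma sig_fcr:
  assumes A': "A' \<in> carrier_mat m' n" and B': "B' \<in> carrier_mat m' n2"
    and A: "A \<in> carrier_mat m n" and B: "B \<in> carrier_mat m n2"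
    and sub: "set (rows (hcat A' B')) \<subseteq> set (rows (hcat A B))"
  shows "full_col_rank A' \<Longrightarrow> full_col_rank A" "full_col_rank B' \<Longrightarrow> full_col_rank B"
proof -
  have match: "\<exists>i'<m. row A' i = row A i' \<and> row B' i = row B i'" if i: "i < m'" for i
  proof -
    have "row (hcat A' B') i \<in> set (rows (hcat A' B'))"
      using i A' unfolding rows_def hcat_def by auto
    hence "row (hcat A' B') i \<in> set (rows (hcat A B))" using sub by blast
    then obtain i' where i': "i' < m" "row (hcat A' B') i = row (hcat A B) i'"
      using A unfolding rows_def hcat_def by auto
    show ?thesis using row_hcat[OF A' B' i] row_hcat[OF A B i'(1)] i' by metis
  qed
  show "full_col_rank A" if fA': "full_col_rank A'"
    unfolding full_col_rank_def
  proof (intro ballI impI)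
    fix v :: "real vec" assume v: "v \<in> carrier_vec (dim_col A)" and z: "A *\<^sub>v v = 0\<^sub>v (dim_row A)"
    have "A' *\<^sub>v v = 0\<^sub>v (dim_row A')"
    proof (rule eq_vecI)
      fix i assume "i < dim_vec (0\<^sub>v (dim_row A'))"
      hence i: "i < m'" using A' by simp
      obtain i' where i': "i' < m" "row A' i = row A i'" using match[OF i] by auto
      have "(A *\<^sub>v v) $ i' = 0" using z i' A by simp
      thus "(A' *\<^sub>v v) $ i = 0\<^sub>v (dim_row A') $ i" using i i' A A' by simp
    qed (use A' in simp)
    thus "v = 0\<^sub>v (dim_col A)" using fA' v A A' unfolding full_col_rank_def by auto
  qed
  show "full_col_rank B" if fB': "full_col_rank B'"
    unfolding full_col_rank_def
  proof (intro ballI impI)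
    fix v :: "real vec" assume v: "v \<in> carrier_vec (dim_col B)" and z: "B *\<^sub>v v = 0\<^sub>v (dim_row B)"
    have "B' *\<^sub>v v = 0\<^sub>v (dim_row B')"
    proof (rule eq_vecI)
      fix i assume "i < dim_vec (0\<^sub>v (dim_row B'))"
      hence i: "i < m'" using B' by simp
      obtain i' where i': "i' < m" "row B' i = row B i'" using match[OF i] by auto
      have "(B *\<^sub>v v) $ i' = 0" using z i' B by simp
      thus "(B' *\<^sub>v v) $ i = 0\<^sub>v (dim_row B') $ i" using i i' B B' by simp
    qed (use B' in simp)
    thus "v = 0\<^sub>v (dim_col B)" using fB' v B B' unfolding full_col_rank_def by auto
  qed
qed



theorem theorem4p5:
  fixes Nd N M :: nat
    and DXg DYg DXs DYs :: "real mat"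
    and DX DY :: "nat \<Rightarrow> real mat"
    and G :: "nat \<Rightarrow> (nat \<times> nat) set"
    and C Dk Ek :: "nat \<Rightarrow> nat \<Rightarrow> real mat"
  assumes global: "DXg \<in> carrier_mat N Nd" "DYg \<in> carrier_mat N Nd"
      and global_rank: "full_col_rank DXg" "full_col_rank DYg"
      and local_dims: "\<And>i. i \<in> {1..M} \<Longrightarrow> dim_col (DX i) = Nd \<and> dim_col (DY i) = Nd
                                   \<and> dim_row (DY i) = dim_row (DX i)"
      and local_union: "(\<Union>i\<in>{1..M}. set (rows (hcat (DX i) (DY i)))) = set (rows (hcat DXg DYg))"
      and sig_dims: "dim_col DXs = Nd" "dim_col DYs = Nd" "dim_row DYs = dim_row DXs"
      and sig_rank: "full_col_rank DXs" "full_col_rank DYs"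
      and sig_in: "\<And>i. i \<in> {1..M} \<Longrightarrow> set (rows (hcat DXs DYs)) \<subseteq> set (rows (hcat (DX i) (DY i)))"
      and graphs: "\<And>k. G k \<subseteq> {1..M} \<times> {1..M}"
      and init: "\<And>i. i \<in> {1..M} \<Longrightarrow> C 0 i = 1\<^sub>m Nd"
      and D_step: "\<And>k i. k \<ge> 1 \<Longrightarrow> i \<in> {1..M} \<Longrightarrow>
          is_basis_of Nd (Dk k i)
            (\<Inter>j \<in> insert i (in_nbrs (G k) i). col_range (C (k - 1) j))"
      and E_step: "\<And>k i. k \<ge> 1 \<Longrightarrow> i \<in> {1..M} \<Longrightarrow>
          is_SSD (DX i * Dk k i) (DY i * Dk k i) (Ek k i)"
      and C_step: "\<And>k i. k \<ge> 1 \<Longrightarrow> i \<in> {1..M} \<Longrightarrow>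
          C k i = (if dim_col (Dk k i * Ek k i) < dim_col (C (k - 1) i)
                   then Dk k i * Ek k i else C (k - 1) i)"
      and agent: "i \<in> {1..M}"
  shows "(\<forall>k. C k i = 0\<^sub>m Nd 0 \<or> full_col_rank (C k i))
       \<and> (\<forall>k\<ge>1. col_range (Dk k i * Ek k i) = col_range (C k i))
       \<and> (\<forall>k\<ge>1. col_range (DX i * C k i) = col_range (DY i * C k i))"
proof -
  have iM: "i \<in> {1..M}" using agent .
  obtain r where DXc: "DX i \<in> carrier_mat r Nd" and DYc: "DY i \<in> carrier_mat r Nd"
    using local_dims[OF iM] by (intro that[of "dim_row (DX i)"]) (auto intro: carrier_matI)
  have DXsc: "DXs \<in> carrier_mat (dim_row DXs) Nd" and DYsc: "DYs \<in> carrier_mat (dim_row DXs) Nd"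
    using sig_dims by (auto intro: carrier_matI)
  have fDX: "full_col_rank (DX i)" and fDY: "full_col_rank (DY i)"
    using sig_fcr[OF DXsc DYsc DXc DYc sig_in[OF iM]] sig_rank by auto
  have stepf: "Dk k i * Ek k i \<in> carrier_mat Nd (dim_col (Ek k i)) \<and> full_col_rank (Dk k i * Ek k i)
      \<and> col_range (Dk k i * Ek k i) \<subseteq> col_range (C (k - 1) i)
      \<and> col_range (DX i * (Dk k i * Ek k i)) = col_range (DY i * (Dk k i * Ek k i))"
    if k: "k \<ge> 1" for k
  proof -
    define d where "d = dim_col (Dk k i)"
    have Db: "is_basis_of Nd (Dk k i) (\<Inter>j \<in> insert i (in_nbrs (G k) i). col_range (C (k - 1) j))"
      using D_step[OF k iM] .
    have Dc: "Dk k i \<in> carrier_mat Nd d" using Db unfolding is_basis_of_def d_def by auto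
    have fD: "full_col_rank (Dk k i)" using Db unfolding is_basis_of_def by auto
    have Dsub: "col_range (Dk k i) \<subseteq> col_range (C (k - 1) i)" using Db unfolding is_basis_of_def by auto
    have Ac: "DX i * Dk k i \<in> carrier_mat r d" using DXc Dc by simp
    have Bc: "DY i * Dk k i \<in> carrier_mat r d" using DYc Dc by simp
    have run: "ssd_run (DX i * Dk k i) (DY i * Dk k i) (1\<^sub>m d) (Ek k i)"
      using E_step[OF k iM] Ac unfolding is_SSD_def d_def by simp
    have inv: "dim_row (Ek k i) = d \<and> full_col_rank (Ek k i)
       \<and> col_range ((DX i * Dk k i) * Ek k i) = col_range ((DY i * Dk k i) * Ek k i)"
    proof (rule ssd_inv[OF run Ac Bc])
      show "1\<^sub>m d \<in> carrier_mat d d" by simp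
      show "DX i * Dk k i = DX i * Dk k i * 1\<^sub>m d" using right_mult_one_mat[OF Ac] by (rule sym)
      show "DY i * Dk k i = DY i * Dk k i * 1\<^sub>m d" using right_mult_one_mat[OF Bc] by (rule sym)
      show "full_col_rank (DX i * Dk k i)" using fcr_mult[OF DXc Dc fDX fD] .
      show "full_col_rank (DY i * Dk k i)" using fcr_mult[OF DYc Dc fDY fD] .
      show "full_col_rank (1\<^sub>m d)" unfolding full_col_rank_def by auto
    qed
    have Ec: "Ek k i \<in> carrier_mat d (dim_col (Ek k i))" using inv by (auto intro: carrier_matI)
    have e1: "DX i * (Dk k i * Ek k i) = (DX i * Dk k i) * Ek k i" using assoc_mult_mat[OF DXc Dc Ec] by (rule sym)
    have e2: "DY i * (Dk k i * Ek k i) = (DY i * Dk k i) * Ek k i" using assoc_mult_mat[OF DYc Dc Ec] by (rule sym)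
    have c3: "col_range (DX i * (Dk k i * Ek k i)) = col_range (DY i * (Dk k i * Ek k i))"
      unfolding e1 e2 using inv by blast
    have c2: "col_range (Dk k i * Ek k i) \<subseteq> col_range (C (k - 1) i)"
      using col_range_mult_sub[OF Dc Ec] Dsub by blast
    have c1: "Dk k i * Ek k i \<in> carrier_mat Nd (dim_col (Ek k i))" using Dc Ec mult_carrier_mat by blast
    show ?thesis using c1 c2 c3 fcr_mult[OF Dc Ec fD] inv by blast
  qed
  have P: "C k i \<in> carrier_mat Nd (dim_col (C k i)) \<and> full_col_rank (C k i)" for k
  proof (induction k)
    case 0
    then show ?case using init[OF iM] unfolding full_col_rank_def by auto
  next
    case (Suc k)
    have "C (Suc k) i = (if dim_col (Dk (Suc k) i * Ek (Suc k) i) < dim_col (C k i)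
                   then Dk (Suc k) i * Ek (Suc k) i else C k i)"
      using C_step[of "Suc k" i] iM by simp
    then show ?case using Suc.IH stepf[of "Suc k"] by auto
  qed
  have b: "col_range (Dk k i * Ek k i) = col_range (C k i)" if k: "k \<ge> 1" for k
  proof (cases "dim_col (Dk k i * Ek k i) < dim_col (C (k - 1) i)")
    case True
    then show ?thesis using C_step[OF k iM] by simp
  next
    case False
    hence Ck: "C k i = C (k - 1) i" using C_step[OF k iM] by simp
    have "col_range (Dk k i * Ek k i) = col_range (C (k - 1) i)"
    proof (rule col_range_eq_dim)
      show "Dk k i * Ek k i \<in> carrier_mat Nd (dim_col (Dk k i * Ek k i))" using stepf[OF k] by auto
      show "C (k - 1) i \<in> carrier_mat Nd (dim_col (C (k - 1) i))" using P by auto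
    qed (use stepf[OF k] P False in auto)
    thus ?thesis using Ck by simp
  qed
  have c: "col_range (DX i * C k i) = col_range (DY i * C k i)" if k: "k \<ge> 1" for k
  proof (cases "dim_col (Dk k i * Ek k i) < dim_col (C (k - 1) i)")
    case True
    then show ?thesis using C_step[OF k iM] stepf[OF k] by simp
  next
    case False
    hence Ck: "C k i = C (k - 1) i" using C_step[OF k iM] by simp
    have M: "Dk k i * Ek k i \<in> carrier_mat Nd (dim_col (Dk k i * Ek k i))" using stepf[OF k] by auto
    have N: "C k i \<in> carrier_mat Nd (dim_col (C k i))" using P by auto
    have eq: "col_range (Dk k i * Ek k i) = col_range (C k i)" using b[OF k] .
    have "col_range (DX i * C k i) = col_range (DX i * (Dk k i * Ek k i))"
      using col_range_cong_mult[OF DXc M N eq] col_range_cong_mult[OF DXc N M eq[symmetric]] by auto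
    also have "\<dots> = col_range (DY i * (Dk k i * Ek k i))" using stepf[OF k] by auto
    also have "\<dots> = col_range (DY i * C k i)"
      using col_range_cong_mult[OF DYc M N eq] col_range_cong_mult[OF DYc N M eq[symmetric]] by auto
    finally show ?thesis .
  qed
  show ?thesis using P b c by auto
qed

end
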